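(* Fix $r\ge 2$ and $\eta>0$. There is $c>0$ depending only on $\eta$ such that, if $p\gg\log n/n$, then a.a.s. for every $Q\in\mathcal{Q}_H$ with $Q\subseteq G_{n,p}$ and every $k\in[r]$, \[ |V^k(Q)|\ge\Big|\bigcup_{v\in V(Q)}N_Q(v)\cap V^k(Q)\Big|\ge c\cdot\min\{n,\,k(Q)\,np\}. \]
   Context: An $[r]$-coloured graph is a graph whose vertices are coloured from $[r]$ (not necessarily properly); $V^k(Q)$ denotes the vertices of $Q$ with colour $k$. $\mathcal{Q}_H$ is the family of $[r]$-coloured graphs $Q\subseteq K_n$ containing an independent set $X_Q\subseteq V^1(Q)$ of size $o(n)$ (bounded by a fixed function $s(n)=o(n)$) such that every edge of $Q$ has an endpoint in $X_Q$ and every $v\in X_Q$ has exactly $\eta np$ neighbours in $Q$ in each colour class $V^k(Q)$, $k\in[r]$ (assume $\eta np$ is an integer); $k(Q)=|X_Q|$. $Q\subseteq G_{n,p}$ means every edge of $Q$ is an edge of $G_{n,p}$. *)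

theory Defs
  imports "HOL-Probability.Probability"
begin

definition Kn_edges :: "nat \<Rightarrow> nat set set" where
  "Kn_edges n = {e. \<exists>i j. i < j \<and> j < n \<and> e = {i, j}}"

definition Gnp :: "nat \<Rightarrow> real \<Rightarrow> nat set set pmf" where
  "Gnp n p = map_pmf (\<lambda>f. {e \<in> Kn_edges n. f e})
                     (Pi_pmf (Kn_edges n) False (\<lambda>_. bernoulli_pmf p))"

definition coloured_graph :: "nat \<Rightarrow> nat \<Rightarrow> nat set \<Rightarrow> nat set set \<Rightarrow> (nat \<Rightarrow> nat) \<Rightarrow> bool" where
  "coloured_graph n r V E col \<longleftrightarrow>
     V \<subseteq> {..<n} \<and> E \<subseteq> {e. \<exists>u v. u \<in> V \<and> v \<in> V \<and> u \<noteq> v \<and> e = {u, v}} \<and>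
     (\<forall>v\<in>V. col v \<in> {1..r})"

definition colour_class :: "nat set \<Rightarrow> (nat \<Rightarrow> nat) \<Rightarrow> nat \<Rightarrow> nat set" where
  "colour_class V col k = {v \<in> V. col v = k}"

definition nbhd :: "nat set set \<Rightarrow> nat \<Rightarrow> nat set" where
  "nbhd E v = {u. {u, v} \<in> E}"

definition in_QH :: "nat \<Rightarrow> real \<Rightarrow> nat \<Rightarrow> real \<Rightarrow> (nat \<Rightarrow> real) \<Rightarrow>
    nat set \<Rightarrow> nat set set \<Rightarrow> (nat \<Rightarrow> nat) \<Rightarrow> nat set \<Rightarrow> bool" where
  "in_QH n p r \<eta> s V E col X \<longleftrightarrow>
     coloured_graph n r V E col \<and>
     X \<subseteq> colour_class V col 1 \<and>
     (\<forall>u\<in>X. \<forall>v\<in>X. {u, v} \<notin> E) \<and>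
     real (card X) \<le> s n \<and>
     (\<forall>e\<in>E. e \<inter> X \<noteq> {}) \<and>
     (\<forall>v\<in>X. \<forall>k\<in>{1..r}. real (card (nbhd E v \<inter> colour_class V col k)) = \<eta> * real n * p)"

end

theory Submission
  imports Defs
begin


lemma finite_Kn: "finite (Kn_edges n)"
proof -
  have "Kn_edges n \<subseteq> Pow {..<n}" unfolding Kn_edges_def by auto
  thus ?thesis by (rule finite_subset) auto
qed

lemma prob_Gnp_subset:
  assumes F: "F \<subseteq> Kn_edges n" and p: "0 \<le> p" "p \<le> 1"
  shows "measure_pmf.prob (Gnp n p) {G. F \<subseteq> G} = p ^ card F"
proof -
  have fin: "finite (Kn_edges n)" by (rule finite_Kn)
  have eq: "(\<lambda>f. {e \<in> Kn_edges n. f e}) -` {G. F \<subseteq> G}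
      = Pi (Kn_edges n) (\<lambda>e. if e \<in> F then {True} else UNIV)"
    using F by (auto simp: Pi_def split: if_splits)
  have "measure_pmf.prob (Gnp n p) {G. F \<subseteq> G}
     = measure_pmf.prob (Pi_pmf (Kn_edges n) False (\<lambda>_. bernoulli_pmf p))
         (Pi (Kn_edges n) (\<lambda>e. if e \<in> F then {True} else UNIV))"
    unfolding Gnp_def by (simp add: eq[symmetric])
  also have "\<dots> = (\<Prod>e\<in>Kn_edges n. measure_pmf.prob (bernoulli_pmf p) (if e \<in> F then {True} else UNIV))"
    by (rule measure_Pi_pmf_Pi[OF fin])
  also have "\<dots> = (\<Prod>e\<in>Kn_edges n. (if e \<in> F then p else 1))"
    by (rule prod.cong) (use p in \<open>auto simp: measure_pmf_single\<close>)
  also have "\<dots> = p ^ card F"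
    using F fin by (simp add: prod.If_cases Int_absorb1)
  finally show ?thesis .
qed


lemma pow_le_exp_fact: "(real k) ^ k \<le> exp (real k) * fact k"
proof -
  have "(real k) ^ k / fact k \<le> exp (real k)"
  proof -
    have s: "summable (\<lambda>n. (real k) ^ n / fact n)"
      using summable_exp[of "real k"] by (simp add: divide_inverse mult.commute)
    have "(real k) ^ k / fact k \<le> (\<Sum>n. (real k) ^ n / fact n)"
      using sum_le_suminf[OF s, of "{k}"] by simp
    also have "\<dots> = exp (real k)" by (simp add: exp_def scaleR_conv_of_real divide_inverse mult.commute)
    finally show ?thesis .
  qed
  thus ?thesis by (simp add: divide_le_eq mult.commute)
qed

lemma choose_fact_le: "(n choose k) * fact k \<le> (n::nat) ^ k"
proof (cases "k \<le> n")
  case True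
  have e: "(fact n::nat) = fact (n-k) * ((n choose k) * fact k)"
    proof -
    have L: "fact k * fact (n - k) * (n choose k) = (fact n::nat)" by (rule binomial_fact_lemma[OF True])
    show ?thesis unfolding L[symmetric] by (simp only: mult.commute mult.left_commute)
  qed
  have "(n choose k) * fact k = (fact n::nat) div fact (n - k)"
    by (subst e) simp
  also have "\<dots> \<le> n ^ k" using fact_div_fact_le_pow[OF True] by simp
  finally show ?thesis .
qed (simp add: binomial_eq_0)

lemma choose_le_exp: assumes "k \<ge> 1" shows "real (n choose k) \<le> (exp 1 * real n / real k) ^ k"
proof -
  have kpos: "real k > 0" using assms by simp
  have a: "real (n choose k) * fact k \<le> real n ^ k"
    using choose_fact_le[of n k] by (metis of_nat_fact of_nat_le_iff of_nat_mult of_nat_power)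
  have "real (n choose k) * (real k ^ k) \<le> real (n choose k) * (exp (real k) * fact k)"
    by (rule mult_left_mono[OF pow_le_exp_fact]) simp
  also have "\<dots> = exp (real k) * (real (n choose k) * fact k)" by simp
  also have "\<dots> \<le> exp (real k) * real n ^ k" by (rule mult_left_mono[OF a]) simp
  finally have b: "real (n choose k) * (real k ^ k) \<le> exp (real k) * real n ^ k" .
  have "exp (real k) = exp 1 ^ k" by (simp add: exp_of_nat_mult[symmetric])
  hence "(exp 1 * real n / real k) ^ k = exp (real k) * real n ^ k / real k ^ k"
    by (simp add: power_divide power_mult_distrib)
  with b kpos show ?thesis by (simp add: pos_le_divide_eq)
qed


lemma term_bound:
  fixes n t w D :: nat and p \<eta> c :: real
  assumes eta: "\<eta> > 0" and p: "0 < p" "p \<le> 1" and c: "c > 0" "c \<le> \<eta>/2" "c \<le> \<eta>^2 / exp 5"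
    and D: "real D \<ge> \<eta> * real n * p" "D \<ge> 1" and t: "t \<ge> 1" and w: "w \<le> n"
    "real w < c * real n" "real w < c * real t * real n * p"
  shows "real (n choose t) * real (n choose w) * (real (w choose D) * p ^ D) ^ t
          \<le> (real n * exp (- real D)) ^ t"
proof (cases "w < D")
  case True
  hence z: "real (w choose D) = 0" by (simp add: binomial_eq_0)
  obtain t' where tt: "t = Suc t'" using t by (cases t) auto
  show ?thesis unfolding tt z by simp
next
  case False
  hence wD: "D \<le> w" by simp
  hence w1: "w \<ge> 1" using D by simp
  hence n1: "n \<ge> 1" using w by simp
  have wpos: "real w > 0" and npos: "real n > 0" and Dpos: "real D > 0" using w1 n1 D by auto
  define R where "R = exp 1 * real n / real w"
  define q where "q = exp 1 * real w / (\<eta> * real n)"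
  have R1: "R \<ge> 1"
  proof -
    have "real w \<le> real n" using w by simp
    also have "\<dots> \<le> exp 1 * real n" using npos by simp  
    finally show ?thesis unfolding R_def using wpos by simp
  qed
  have q0: "q \<ge> 0" unfolding q_def using eta npos by simp
  have A: "real (n choose t) \<le> real n ^ t"
  proof (cases "t \<le> n")
    case True thus ?thesis using binomial_le_pow[OF True] by (metis of_nat_le_iff of_nat_power)
  next
    case False thus ?thesis by (simp add: binomial_eq_0)
  qed
  have B: "real (n choose w) \<le> R ^ w" unfolding R_def using choose_le_exp[OF w1] .
  have C: "real (w choose D) * p ^ D \<le> q ^ D"
  proof -
    have "real (w choose D) * p ^ D \<le> (exp 1 * real w / real D) ^ D * p ^ D"
      by (rule mult_right_mono[OF choose_le_exp[OF D(2)]]) (use p in simp)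
    also have "\<dots> = (exp 1 * real w * p / real D) ^ D" by (simp add: power_mult_distrib[symmetric])
    also have "\<dots> \<le> q ^ D"
    proof (rule power_mono)
      have "p / real D \<le> 1 / (\<eta> * real n)"
        using D(1) p eta npos Dpos by (simp add: divide_simps mult.commute mult.left_commute)
      hence "exp 1 * real w * (p / real D) \<le> exp 1 * real w * (1 / (\<eta> * real n))"
        by (rule mult_left_mono) (use wpos in simp)
      thus "exp 1 * real w * p / real D \<le> q" unfolding q_def by simp
      show "0 \<le> exp 1 * real w * p / real D" using p wpos Dpos by simp
    qed
    finally show ?thesis .
  qed
  have C0: "0 \<le> real (w choose D) * p ^ D" using p by simp
  have twoW: "2 * w \<le> t * D"
  proof -
    have "real w < c * real t * real n * p" by (rule w(3))
    also have "\<dots> \<le> (\<eta>/2) * real t * real n * p"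
      using c p npos t by (intro mult_right_mono) auto
    also have "\<dots> \<le> real t * real D / 2" using D(1) t by (simp add: mult_ac)
    finally have "2 * real w < real t * real D" by simp
    thus ?thesis by (metis less_imp_le of_nat_less_iff of_nat_mult of_nat_numeral)
  qed
  have Rq: "R * q^2 \<le> exp (-2)"
  proof -
    have "R * q^2 = exp 1 ^ 3 * real w / (\<eta>^2 * real n)"
      unfolding R_def q_def using wpos npos eta by (simp add: power2_eq_square field_simps power3_eq_cube)
    also have "\<dots> \<le> exp 1 ^ 3 * (c * real n) / (\<eta>^2 * real n)"
      using w(2) eta npos by (intro divide_right_mono mult_left_mono) auto
    also have "\<dots> = exp 3 * c / \<eta>^2" using npos by (simp add: exp_of_nat_mult[symmetric])
    also have "\<dots> \<le> exp 3 * (\<eta>^2 / exp 5) / \<eta>^2"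
      using c eta by (intro divide_right_mono mult_left_mono) auto
    also have "\<dots> = exp (-2)" using eta by (simp add: exp_diff[symmetric] exp_minus field_simps)
    finally show ?thesis .
  qed
  have sq: "(real (n choose w) * (real (w choose D) * p ^ D) ^ t)^2 \<le> (exp (- real D) ^ t)^2"
  proof -
    have "(real (n choose w) * (real (w choose D) * p ^ D) ^ t)^2
        = real (n choose w)^2 * ((real (w choose D) * p ^ D)^t)^2" by (simp add: power_mult_distrib)
    also have "\<dots> \<le> (R ^ w)^2 * ((q^D)^t)^2"
      by (intro mult_mono power_mono B C C0) (auto simp: q0 intro!: zero_le_power C0)
    also have "(R ^ w)^2 = R ^ (2*w)" by (simp add: power_mult[symmetric] mult.commute)
    also have "R ^ (2*w) \<le> R ^ (t*D)" by (rule power_increasing[OF twoW R1])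
    also have "((q^D)^t)^2 = (q^2) ^ (t*D)" by (simp add: power_mult[symmetric] mult_ac)
    also have "R ^ (t*D) * (q^2) ^ (t*D) = (R * q^2) ^ (t*D)" by (simp add: power_mult_distrib)
    also have "\<dots> \<le> exp (-2) ^ (t*D)" by (rule power_mono[OF Rq]) (use R1 in simp)
    also have "\<dots> = (exp (- real D) ^ t)^2"
      by (simp add: exp_of_nat_mult[symmetric] power_mult[symmetric] exp_minus mult_ac power_inverse)
    finally show ?thesis by (simp add: mult_right_mono)
  qed
  have BC: "real (n choose w) * (real (w choose D) * p ^ D) ^ t \<le> exp (- real D) ^ t"
    by (rule power2_le_imp_le[OF sq]) simp
  have "real (n choose t) * real (n choose w) * (real (w choose D) * p ^ D) ^ t
      = real (n choose t) * (real (n choose w) * (real (w choose D) * p ^ D) ^ t)" by simp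
  also have "\<dots> \<le> real n ^ t * exp (- real D) ^ t"
    by (intro mult_mono A BC) (use C0 in auto)
  also have "\<dots> = (real n * exp (- real D)) ^ t" by (simp add: power_mult_distrib)
  finally show ?thesis .
qed


definition edgesX :: "nat set \<Rightarrow> (nat \<Rightarrow> nat set) \<Rightarrow> nat set set" where
  "edgesX X \<phi> = (\<Union>x\<in>X. (\<lambda>y. {x, y}) ` \<phi> x)"

lemma edgesX_card:
  assumes "finite X" "X \<inter> W = {}" "finite W" "\<And>x. x \<in> X \<Longrightarrow> \<phi> x \<subseteq> W \<and> card (\<phi> x) = D"
  shows "card (edgesX X \<phi>) = card X * D"
proof -
  have fin: "\<And>x. x \<in> X \<Longrightarrow> finite (\<phi> x)" using assms(3,4) finite_subset by blast
  have "card (edgesX X \<phi>) = (\<Sum>x\<in>X. card ((\<lambda>y. {x, y}) ` \<phi> x))"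
    unfolding edgesX_def
  proof (rule card_UN_disjoint)
    show "finite X" by fact
    show "\<forall>i\<in>X. finite ((\<lambda>y. {i, y}) ` \<phi> i)" using fin by auto
    show "\<forall>i\<in>X. \<forall>j\<in>X. i \<noteq> j \<longrightarrow> (\<lambda>y. {i, y}) ` \<phi> i \<inter> (\<lambda>y. {j, y}) ` \<phi> j = {}"
    proof (intro ballI impI)
      fix i j assume ij: "i \<in> X" "j \<in> X" "i \<noteq> j"
      show "(\<lambda>y. {i, y}) ` \<phi> i \<inter> (\<lambda>y. {j, y}) ` \<phi> j = {}"
      proof (rule ccontr)
        assume "\<not> ?thesis"
        then obtain y y' where y: "y \<in> \<phi> i" "y' \<in> \<phi> j" "{i, y} = {j, y'}" by auto
        hence "i = y'" using ij by (auto simp: doubleton_eq_iff)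
        moreover have "y' \<in> W" using y assms(4) ij by auto
        ultimately show False using ij assms(2) by auto
      qed
    qed
  qed
  also have "\<dots> = (\<Sum>x\<in>X. D)"
  proof (rule sum.cong[OF refl])
    fix x assume x: "x \<in> X"
    have "inj_on (\<lambda>y. {x, y}) (\<phi> x)" by (auto simp: inj_on_def doubleton_eq_iff)
    thus "card ((\<lambda>y. {x, y}) ` \<phi> x) = D" using assms(4)[OF x] by (simp add: card_image)
  qed
  finally show ?thesis by simp
qed

lemma edgesX_Kn:
  assumes "X \<subseteq> {..<n}" "W \<subseteq> {..<n}" "X \<inter> W = {}" "\<And>x. x \<in> X \<Longrightarrow> \<phi> x \<subseteq> W"
  shows "edgesX X \<phi> \<subseteq> Kn_edges n"
proof
  fix e assume "e \<in> edgesX X \<phi>"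
  then obtain x y where xy: "x \<in> X" "y \<in> \<phi> x" "e = {x, y}" unfolding edgesX_def by auto
  have yW: "y \<in> W" using xy assms(4) by auto
  have "x \<noteq> y" using xy yW assms(3) by auto
  moreover have "x < n" "y < n" using xy yW assms(1,2) by auto
  ultimately show "e \<in> Kn_edges n"
  proof (cases "x < y")
    case True thus ?thesis using xy \<open>y < n\<close> unfolding Kn_edges_def by blast
  next
    case False
    hence "y < x" using \<open>x \<noteq> y\<close> by simp
    moreover have "e = {y, x}" using xy by (simp add: insert_commute)
    ultimately show ?thesis using \<open>x < n\<close> unfolding Kn_edges_def by blast
  qed
qed

definition Ev :: "nat \<Rightarrow> nat \<Rightarrow> nat set \<Rightarrow> nat set \<Rightarrow> nat set set set" where
  "Ev n D X W = (if X \<inter> W = {} then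
      (\<Union>\<phi>\<in>(\<Pi>\<^sub>E x\<in>X. {S. S \<subseteq> W \<and> card S = D}). {G. edgesX X \<phi> \<subseteq> G}) else {})"

lemma prob_Ev:
  assumes p: "0 \<le> p" "p \<le> 1" and X: "X \<subseteq> {..<n}" and W: "W \<subseteq> {..<n}"
  shows "measure_pmf.prob (Gnp n p) (Ev n D X W) \<le> real (card W choose D) ^ card X * p ^ (card X * D)"
proof (cases "X \<inter> W = {}")
  case False thus ?thesis unfolding Ev_def using p by simp
next
  case True
  have fX: "finite X" using X finite_subset by blast
  have fW: "finite W" using W finite_subset by blast
  let ?P = "\<Pi>\<^sub>E x\<in>X. {S. S \<subseteq> W \<and> card S = D}"
  have finP: "finite ?P" using fX fW by (intro finite_PiE) auto
  have "measure_pmf.prob (Gnp n p) (Ev n D X W)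
      \<le> (\<Sum>\<phi>\<in>?P. measure_pmf.prob (Gnp n p) {G. edgesX X \<phi> \<subseteq> G})"
    unfolding Ev_def using True by (simp add: measure_UNION_le[OF finP])
  also have "\<dots> = (\<Sum>\<phi>\<in>?P. p ^ (card X * D))"
  proof (rule sum.cong[OF refl])
    fix \<phi> assume \<phi>: "\<phi> \<in> ?P"
    have "measure_pmf.prob (Gnp n p) {G. edgesX X \<phi> \<subseteq> G} = p ^ card (edgesX X \<phi>)"
      by (rule prob_Gnp_subset[OF edgesX_Kn[OF X W True] p]) (use \<phi> in auto)
    also have "card (edgesX X \<phi>) = card X * D"
      by (rule edgesX_card[OF fX True fW]) (use \<phi> in auto)
    finally show "measure_pmf.prob (Gnp n p) {G. edgesX X \<phi> \<subseteq> G} = p ^ (card X * D)" .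
  qed
  also have "\<dots> = real (card ?P) * p ^ (card X * D)" by simp
  also have "card ?P = (card W choose D) ^ card X"
    using fX fW by (simp add: card_PiE n_subsets)
  finally show ?thesis by simp
qed


lemma prob_UN_le:
  fixes M :: "'a pmf"
  assumes "finite I" "\<And>i. i \<in> I \<Longrightarrow> measure_pmf.prob M (A i) \<le> f i"
  shows "measure_pmf.prob M (\<Union>i\<in>I. A i) \<le> (\<Sum>i\<in>I. f i)"
proof -
  have "measure_pmf.prob M (\<Union>i\<in>I. A i) \<le> (\<Sum>i\<in>I. measure_pmf.prob M (A i))"
    by (rule measure_UNION_le[OF assms(1)]) simp
  also have "\<dots> \<le> (\<Sum>i\<in>I. f i)" by (rule sum_mono) (rule assms(2))
  finally show ?thesis .
qed

lemma bad_sub: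
  assumes eta: "\<eta> > 0" and c: "c > 0"
  shows "- {G. \<forall>V E col X. in_QH n p r \<eta> s V E col X \<and> E \<subseteq> G \<longrightarrow>
              (\<forall>k\<in>{1..r}.
                 card (colour_class V col k)
                   \<ge> card ((\<Union>v\<in>V. nbhd E v) \<inter> colour_class V col k) \<and>
                 real (card ((\<Union>v\<in>V. nbhd E v) \<inter> colour_class V col k))
                   \<ge> c * min (real n) (real (card X) * real n * p))}
    \<subseteq> (\<Union>t\<in>{1..n}. \<Union>w\<in>{w. w \<le> n \<and> real w < c * real n \<and> real w < c * real t * real n * p}.
         \<Union>X\<in>{X. X \<subseteq> {..<n} \<and> card X = t}. \<Union>W\<in>{W. W \<subseteq> {..<n} \<and> card W = w}.
           Ev n (nat \<lceil>\<eta> * real n * p\<rceil>) X W)"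
proof
  fix G assume "G \<in> - {G. \<forall>V E col X. in_QH n p r \<eta> s V E col X \<and> E \<subseteq> G \<longrightarrow>
              (\<forall>k\<in>{1..r}.
                 card (colour_class V col k)
                   \<ge> card ((\<Union>v\<in>V. nbhd E v) \<inter> colour_class V col k) \<and>
                 real (card ((\<Union>v\<in>V. nbhd E v) \<inter> colour_class V col k))
                   \<ge> c * min (real n) (real (card X) * real n * p))}"
  then obtain V E col X k where Q: "in_QH n p r \<eta> s V E col X" and EG: "E \<subseteq> G" and k: "k \<in> {1..r}"
    and nb: "\<not> (card (colour_class V col k)
                   \<ge> card ((\<Union>v\<in>V. nbhd E v) \<inter> colour_class V col k) \<and>
                 real (card ((\<Union>v\<in>V. nbhd E v) \<inter> colour_class V col k))
                   \<ge> c * min (real n) (real (card X) * real n * p))"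
    by blast
  define U where "U = (\<Union>v\<in>V. nbhd E v) \<inter> colour_class V col k"
  have Vn: "V \<subseteq> {..<n}" using Q unfolding in_QH_def coloured_graph_def by auto
  have finV: "finite V" using Vn finite_subset by blast
  have XV: "X \<subseteq> V" using Q unfolding in_QH_def colour_class_def by auto
  have indep: "\<And>u v. u \<in> X \<Longrightarrow> v \<in> X \<Longrightarrow> {u, v} \<notin> E" using Q unfolding in_QH_def by auto
  have deg: "\<And>v. v \<in> X \<Longrightarrow> real (card (nbhd E v \<inter> colour_class V col k)) = \<eta> * real n * p"
    using Q k unfolding in_QH_def by auto
  have Ucl: "U \<subseteq> colour_class V col k" unfolding U_def by auto
  have clV: "colour_class V col k \<subseteq> V" unfolding colour_class_def by auto
  have "card U \<le> card (colour_class V col k)"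
    by (rule card_mono[OF finite_subset[OF clV finV] Ucl])
  hence lt: "real (card U) < c * min (real n) (real (card X) * real n * p)"
    using nb unfolding U_def by auto
  have Xne: "X \<noteq> {}"
  proof
    assume "X = {}"
    hence "c * min (real n) (real (card X) * real n * p) = 0" by simp
    with lt show False by simp
  qed
  define t where "t = card X"
  have finX: "finite X" using XV finV finite_subset by blast
  have t1: "t \<ge> 1" using Xne finX unfolding t_def by (simp add: Suc_le_eq card_gt_0_iff)
  have tn: "t \<le> n" unfolding t_def using card_mono[OF _ subset_trans[OF XV Vn]] by simp
  define W where "W = U - X"
  define w where "w = card W"
  have Wn: "W \<subseteq> {..<n}" unfolding W_def using Ucl clV Vn by auto
  have wn: "w \<le> n" unfolding w_def using card_mono[OF _ Wn] by simp
  have wU: "w \<le> card U" unfolding w_def W_def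
    by (rule card_mono) (use finite_subset[OF subset_trans[OF Ucl clV] finV] in auto)
  have m1: "c * min (real n) (real (card X) * real n * p) \<le> c * real n"
    using c by (intro mult_left_mono) auto
  have m2: "c * min (real n) (real (card X) * real n * p) \<le> c * (real t * real n * p)"
    using c unfolding t_def by (intro mult_left_mono) auto
  have w1: "real w < c * real n" using wU lt m1 by linarith
  have w2: "real w < c * real t * real n * p" using wU lt m2 by (simp add: mult_ac)
  define \<phi> where "\<phi> = (\<lambda>x. nbhd E x \<inter> colour_class V col k)"
  have \<phi>W: "\<phi> x \<subseteq> W" if x: "x \<in> X" for x
  proof
    fix y assume y: "y \<in> \<phi> x"
    have "y \<in> nbhd E x" "y \<in> colour_class V col k" using y unfolding \<phi>_def by auto
    moreover have "x \<in> V" using x XV by auto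
    ultimately have "y \<in> U" unfolding U_def by auto
    moreover have "y \<notin> X"
    proof
      assume "y \<in> X"
      hence "{y, x} \<notin> E" using indep x by blast
      with \<open>y \<in> nbhd E x\<close> show False unfolding nbhd_def by simp
    qed
    ultimately show "y \<in> W" unfolding W_def by simp
  qed
  have \<phi>D: "card (\<phi> x) = nat \<lceil>\<eta> * real n * p\<rceil>" if x: "x \<in> X" for x
  proof -
    have "\<eta> * real n * p = real (card (\<phi> x))" using deg[OF x] unfolding \<phi>_def by simp
    thus ?thesis by simp
  qed
  have XW: "X \<inter> W = {}" unfolding W_def by auto
  have PiM: "restrict \<phi> X \<in> (\<Pi>\<^sub>E x\<in>X. {S. S \<subseteq> W \<and> card S = nat \<lceil>\<eta> * real n * p\<rceil>})"
    using \<phi>W \<phi>D by auto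
  have edG: "edgesX X (restrict \<phi> X) \<subseteq> G"
  proof
    fix e assume "e \<in> edgesX X (restrict \<phi> X)"
    then obtain x y where xy: "x \<in> X" "y \<in> \<phi> x" "e = {x, y}" unfolding edgesX_def by auto
    hence "{y, x} \<in> E" unfolding \<phi>_def nbhd_def by auto
    hence "e \<in> E" using xy by (simp add: insert_commute)
    thus "e \<in> G" using EG by auto
  qed
  have "G \<in> (\<Union>\<phi>\<in>(\<Pi>\<^sub>E x\<in>X. {S. S \<subseteq> W \<and> card S = nat \<lceil>\<eta> * real n * p\<rceil>}). {G. edgesX X \<phi> \<subseteq> G})"
    by (rule UN_I[OF PiM]) (simp add: edG)
  hence Gm: "G \<in> Ev n (nat \<lceil>\<eta> * real n * p\<rceil>) X W" unfolding Ev_def using XW by simp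
  have tm: "t \<in> {1..n}" using t1 tn by auto
  have wm: "w \<in> {w. w \<le> n \<and> real w < c * real n \<and> real w < c * real t * real n * p}"
    using wn w1 w2 by auto
  have Xm: "X \<in> {X. X \<subseteq> {..<n} \<and> card X = t}" using XV Vn t_def by auto
  have Wm: "W \<in> {W. W \<subseteq> {..<n} \<and> card W = w}" using Wn w_def by auto
  show "G \<in> (\<Union>t\<in>{1..n}. \<Union>w\<in>{w. w \<le> n \<and> real w < c * real n \<and> real w < c * real t * real n * p}.
         \<Union>X\<in>{X. X \<subseteq> {..<n} \<and> card X = t}. \<Union>W\<in>{W. W \<subseteq> {..<n} \<and> card W = w}.
           Ev n (nat \<lceil>\<eta> * real n * p\<rceil>) X W)"
    by (rule UN_I[OF tm], rule UN_I[OF wm], rule UN_I[OF Xm], rule UN_I[OF Wm], rule Gm)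
qed


lemma prob_bad:
  assumes p: "0 \<le> p" "p \<le> 1" and eta: "\<eta> > 0" and c: "c > 0"
  shows "measure_pmf.prob (Gnp n p) (- {G. \<forall>V E col X. in_QH n p r \<eta> s V E col X \<and> E \<subseteq> G \<longrightarrow>
              (\<forall>k\<in>{1..r}.
                 card (colour_class V col k)
                   \<ge> card ((\<Union>v\<in>V. nbhd E v) \<inter> colour_class V col k) \<and>
                 real (card ((\<Union>v\<in>V. nbhd E v) \<inter> colour_class V col k))
                   \<ge> c * min (real n) (real (card X) * real n * p))})
    \<le> (\<Sum>t\<in>{1..n}. \<Sum>w\<in>{w. w \<le> n \<and> real w < c * real n \<and> real w < c * real t * real n * p}.
         real (n choose t) * real (n choose w) * (real (w choose nat \<lceil>\<eta> * real n * p\<rceil>) * p ^ nat \<lceil>\<eta> * real n * p\<rceil>) ^ t)"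
    (is "measure_pmf.prob _ ?B \<le> _")
proof -
  define D where "D = nat \<lceil>\<eta> * real n * p\<rceil>"
  have "measure_pmf.prob (Gnp n p) ?B \<le> measure_pmf.prob (Gnp n p)
     (\<Union>t\<in>{1..n}. \<Union>w\<in>{w. w \<le> n \<and> real w < c * real n \<and> real w < c * real t * real n * p}.
         \<Union>X\<in>{X. X \<subseteq> {..<n} \<and> card X = t}. \<Union>W\<in>{W. W \<subseteq> {..<n} \<and> card W = w}.
           Ev n D X W)"
    unfolding D_def by (rule measure_pmf.finite_measure_mono[OF bad_sub[OF eta c]]) simp
  also have "\<dots> \<le> (\<Sum>t\<in>{1..n}. \<Sum>w\<in>{w. w \<le> n \<and> real w < c * real n \<and> real w < c * real t * real n * p}.
         real (n choose t) * real (n choose w) * (real (w choose D) * p ^ D) ^ t)"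
  proof (intro prob_UN_le)
    fix t assume t: "t \<in> {1..n}"
    show "finite {w. w \<le> n \<and> real w < c * real n \<and> real w < c * real t * real n * p}" by simp
    fix w assume w: "w \<in> {w. w \<le> n \<and> real w < c * real n \<and> real w < c * real t * real n * p}"
    have finXs: "finite {X. X \<subseteq> {..<n} \<and> card X = t}" by simp
    have finWs: "finite {W. W \<subseteq> {..<n} \<and> card W = w}" by simp
    have "measure_pmf.prob (Gnp n p) (\<Union>X\<in>{X. X \<subseteq> {..<n} \<and> card X = t}. \<Union>W\<in>{W. W \<subseteq> {..<n} \<and> card W = w}.
           Ev n D X W) \<le> (\<Sum>X\<in>{X. X \<subseteq> {..<n} \<and> card X = t}.
             real (n choose w) * (real (w choose D) ^ t * p ^ (t * D)))"
    proof (rule prob_UN_le[OF finXs])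
      fix X assume X: "X \<in> {X. X \<subseteq> {..<n} \<and> card X = t}"
      have "measure_pmf.prob (Gnp n p) (\<Union>W\<in>{W. W \<subseteq> {..<n} \<and> card W = w}. Ev n D X W)
          \<le> (\<Sum>W\<in>{W. W \<subseteq> {..<n} \<and> card W = w}. real (w choose D) ^ t * p ^ (t * D))"
      proof (rule prob_UN_le[OF finWs])
        fix W assume W: "W \<in> {W. W \<subseteq> {..<n} \<and> card W = w}"
        show "measure_pmf.prob (Gnp n p) (Ev n D X W) \<le> real (w choose D) ^ t * p ^ (t * D)"
          using prob_Ev[OF p, of X n W D] X W by simp
      qed
      also have "\<dots> = real (n choose w) * (real (w choose D) ^ t * p ^ (t * D))"
        using n_subsets[of "{..<n}" w] by simp
      finally show "measure_pmf.prob (Gnp n p) (\<Union>W\<in>{W. W \<subseteq> {..<n} \<and> card W = w}. Ev n D X W)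
          \<le> real (n choose w) * (real (w choose D) ^ t * p ^ (t * D))" .
    qed
    also have "\<dots> = real (n choose t) * real (n choose w) * (real (w choose D) * p ^ D) ^ t"
      using n_subsets[of "{..<n}" t] by (simp add: power_mult_distrib power_mult mult.commute[of t D])
    finally show "measure_pmf.prob (Gnp n p) (\<Union>X\<in>{X. X \<subseteq> {..<n} \<and> card X = t}. \<Union>W\<in>{W. W \<subseteq> {..<n} \<and> card W = w}.
           Ev n D X W) \<le> real (n choose t) * real (n choose w) * (real (w choose D) * p ^ D) ^ t" .
  qed simp
  finally show ?thesis unfolding D_def .
qed


lemma exp4: assumes "n \<ge> 1" shows "exp (4 * ln (real n)) = real n ^ 4"
proof -
  have "exp (real 4 * ln (real n)) = exp (ln (real n)) ^ 4" by (rule exp_of_nat_mult)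
  thus ?thesis using assms by simp
qed

lemma bnd_small:
  fixes n :: nat and p \<eta> c :: real
  assumes eta: "\<eta> > 0" and cdef: "c = min (\<eta>/2) (\<eta>^2 / exp 5)" and p: "0 < p" "p \<le> 1"
    and n: "n \<ge> 1" and big: "\<eta> * real n * p \<ge> 4 * ln (real n)" "ln (real n) > 0"
  shows "(\<Sum>t\<in>{1..n}. \<Sum>w\<in>{w. w \<le> n \<and> real w < c * real n \<and> real w < c * real t * real n * p}.
         real (n choose t) * real (n choose w) * (real (w choose nat \<lceil>\<eta> * real n * p\<rceil>) * p ^ nat \<lceil>\<eta> * real n * p\<rceil>) ^ t)
       \<le> 2 / real n"
proof -
  define D where "D = nat \<lceil>\<eta> * real n * p\<rceil>"
  have pos: "\<eta> * real n * p > 0" using big by linarith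
  have Dint: "real D = real_of_int \<lceil>\<eta> * real n * p\<rceil>" unfolding D_def using pos by simp
  have Dge: "real D \<ge> \<eta> * real n * p" unfolding Dint by (rule le_of_int_ceiling)
  have D1: "D \<ge> 1" using Dge pos by simp
  have c: "c > 0" "c \<le> \<eta>/2" "c \<le> \<eta>^2 / exp 5" unfolding cdef using eta by (auto simp: min_def)
  have npos: "real n > 0" using n by simp
  have base: "real n * exp (- real D) \<le> 1 / real n ^ 3"
  proof -
    have "exp (- real D) \<le> exp (- (4 * ln (real n)))" using Dge big by simp
    also have "\<dots> = 1 / real n ^ 4" using exp4[OF n] by (simp add: exp_minus divide_inverse)
    finally have "real n * exp (- real D) \<le> real n * (1 / real n ^ 4)"
      by (rule mult_left_mono) simp
    also have "\<dots> = 1 / real n ^ 3" using npos by (simp add: eval_nat_numeral)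
    finally show ?thesis .
  qed
  have b0: "0 \<le> real n * exp (- real D)" by simp
  have b1: "real n * exp (- real D) \<le> 1"
  proof -
    have "1 \<le> real n ^ 3" using n by (simp add: one_le_power)
    hence "1 / real n ^ 3 \<le> 1" by (auto simp: divide_le_eq_1)
    thus ?thesis using base by linarith
  qed
  have tmb: "real (n choose t) * real (n choose w) * (real (w choose D) * p ^ D) ^ t \<le> 1 / real n ^ 3"
    if t: "t \<in> {1..n}" and w: "w \<in> {w. w \<le> n \<and> real w < c * real n \<and> real w < c * real t * real n * p}" for t w
  proof -
    have "real (n choose t) * real (n choose w) * (real (w choose D) * p ^ D) ^ t \<le> (real n * exp (- real D)) ^ t"
      by (rule term_bound[OF eta p c Dge D1]) (use t w in auto)
    also have "\<dots> \<le> (real n * exp (- real D)) ^ 1"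
      by (rule power_decreasing) (use t b0 b1 in auto)
    also have "\<dots> \<le> 1 / real n ^ 3" using base by simp
    finally show ?thesis .
  qed
  have "(\<Sum>t\<in>{1..n}. \<Sum>w\<in>{w. w \<le> n \<and> real w < c * real n \<and> real w < c * real t * real n * p}.
         real (n choose t) * real (n choose w) * (real (w choose D) * p ^ D) ^ t)
      \<le> (\<Sum>t\<in>{1..n}. \<Sum>w\<in>{w. w \<le> n \<and> real w < c * real n \<and> real w < c * real t * real n * p}. 1 / real n ^ 3)"
    by (intro sum_mono tmb) auto
  also have "\<dots> \<le> (\<Sum>t\<in>{1..n}. \<Sum>w\<in>{..n}. 1 / real n ^ 3)"
    by (intro sum_mono sum_mono2) auto
  also have "\<dots> = real n * (real n + 1) / real n ^ 3" by simp
  also have "\<dots> = (real n + 1) / real n / real n"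
    using npos by (simp add: power3_eq_cube)
  also have "\<dots> \<le> 2 / real n"
  proof (rule divide_right_mono)
    show "(real n + 1) / real n \<le> 2" using npos n by (simp add: divide_le_eq)
  qed simp
  finally show ?thesis unfolding D_def .
qed


theorem mainTheorem10:
  fixes \<eta> :: real
  assumes "\<eta> > 0"
  shows "\<exists>c>0. \<forall>(r::nat) (p::nat \<Rightarrow> real) (s::nat \<Rightarrow> real).
     r \<ge> 2 \<longrightarrow>
     (\<forall>n. 0 \<le> p n \<and> p n \<le> 1) \<longrightarrow>
     filterlim (\<lambda>n. p n / (ln (real n) / real n)) at_top sequentially \<longrightarrow>
     s \<in> o(\<lambda>n. real n) \<longrightarrow>
     ((\<lambda>n. measure_pmf.prob (Gnp n (p n))
        {G. \<forall>V E col X. in_QH n (p n) r \<eta> s V E col X \<and> E \<subseteq> G \<longrightarrow>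
              (\<forall>k\<in>{1..r}.
                 card (colour_class V col k)
                   \<ge> card ((\<Union>v\<in>V. nbhd E v) \<inter> colour_class V col k) \<and>
                 real (card ((\<Union>v\<in>V. nbhd E v) \<inter> colour_class V col k))
                   \<ge> c * min (real n) (real (card X) * real n * p n))})
      \<longlonglongrightarrow> 1)"
proof -
  have eta: "\<eta> > 0" by fact
  define c where "c = min (\<eta>/2) (\<eta>^2 / exp 5)"
  have cpos: "c > 0" unfolding c_def using eta by simp
  show ?thesis
  proof (rule exI[of _ c], intro conjI allI impI cpos)
    fix r :: nat and p :: "nat \<Rightarrow> real" and s :: "nat \<Rightarrow> real"
    assume pr: "\<forall>n. 0 \<le> p n \<and> p n \<le> 1"
      and lim: "filterlim (\<lambda>n. p n / (ln (real n) / real n)) at_top sequentially"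
    define good where "good = (\<lambda>n. {G. \<forall>V E col X. in_QH n (p n) r \<eta> s V E col X \<and> E \<subseteq> G \<longrightarrow>
              (\<forall>k\<in>{1..r}.
                 card (colour_class V col k)
                   \<ge> card ((\<Union>v\<in>V. nbhd E v) \<inter> colour_class V col k) \<and>
                 real (card ((\<Union>v\<in>V. nbhd E v) \<inter> colour_class V col k))
                   \<ge> c * min (real n) (real (card X) * real n * p n))})"
    have ev1: "eventually (\<lambda>n. 4 / \<eta> \<le> p n / (ln (real n) / real n)) sequentially"
      using lim unfolding filterlim_at_top by blast
    have ev2: "eventually (\<lambda>n. n \<ge> 3) sequentially" by (rule eventually_ge_at_top)
    have lower: "eventually (\<lambda>n. 1 - 2 / real n \<le> measure_pmf.prob (Gnp n (p n)) (good n)) sequentially"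
      using ev1 ev2
    proof eventually_elim
      case (elim n)
      have n1: "n \<ge> 1" using elim by simp
      have lnpos: "ln (real n) > 0" using elim by simp
      have q: "ln (real n) / real n > 0" using lnpos n1 by simp
      have h: "4 / \<eta> * (ln (real n) / real n) \<le> p n"
        using elim(1) by (subst (asm) pos_le_divide_eq[OF q])
      have e: "\<eta> * real n * (4 / \<eta> * (ln (real n) / real n)) = 4 * ln (real n)"
        using eta n1 by (simp add: field_simps)
      have "\<eta> * real n * (4 / \<eta> * (ln (real n) / real n)) \<le> \<eta> * real n * p n"
        by (rule mult_left_mono[OF h]) (use eta in simp)
      hence big: "\<eta> * real n * p n \<ge> 4 * ln (real n)" using e by simp
      have ppos: "p n > 0"
      proof (rule ccontr)
        assume "\<not> p n > 0"
        hence "\<eta> * real n * p n \<le> 0" using eta by (simp add: mult_nonneg_nonpos)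
        thus False using big lnpos by linarith
      qed
      have "measure_pmf.prob (Gnp n (p n)) (- good n) \<le> 2 / real n"
        unfolding good_def
        by (rule order.trans[OF prob_bad bnd_small[OF eta c_def ppos _ n1 big lnpos]]) (use pr eta cpos ppos in auto)
      moreover have "measure_pmf.prob (Gnp n (p n)) (good n) = 1 - measure_pmf.prob (Gnp n (p n)) (- good n)"
        using measure_pmf.prob_compl[of "- good n" "Gnp n (p n)"] by simp
      ultimately show ?case by simp
    qed
    have upper: "eventually (\<lambda>n. measure_pmf.prob (Gnp n (p n)) (good n) \<le> 1) sequentially"
      by simp
    have l1: "(\<lambda>n. 1 - 2 / real n) \<longlonglongrightarrow> 1"
      using tendsto_diff[OF tendsto_const lim_const_over_n[of "2::real"]] by simp
    have "(\<lambda>n. measure_pmf.prob (Gnp n (p n)) (good n)) \<longlonglongrightarrow> 1"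
      by (rule tendsto_sandwich[OF lower upper l1 tendsto_const])
    thus "(\<lambda>n. measure_pmf.prob (Gnp n (p n))
        {G. \<forall>V E col X. in_QH n (p n) r \<eta> s V E col X \<and> E \<subseteq> G \<longrightarrow>
              (\<forall>k\<in>{1..r}.
                 card (colour_class V col k)
                   \<ge> card ((\<Union>v\<in>V. nbhd E v) \<inter> colour_class V col k) \<and>
                 real (card ((\<Union>v\<in>V. nbhd E v) \<inter> colour_class V col k))
                   \<ge> c * min (real n) (real (card X) * real n * p n))})
      \<longlonglongrightarrow> 1" unfolding good_def .
  qed
qed
end
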